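(* A collective choice problem $\mathcal C$ is Finitely Approximable if and only if it satisfies Thin Individual Indifference.
   Context: Collective choice problem $\mathcal C$: players $i\in N\cup\{A\}$ (voters $N$ and agenda setter $A$) with complete, transitive, continuous preferences $\succsim_i$ on a compact metrizable policy space $X$ with metric $d$. $d(x,B)=\inf_{y\in B}d(x,y)$. A generic $\epsilon$-grid is a finite set $X_\epsilon\subseteq X$ with $\max_{x\in X}d(x,X_\epsilon)<\epsilon$ such that every player's preference is antisymmetric on $X_\epsilon$. $\mathcal C$ is Finitely Approximable if for every $x\in X$ and $\epsilon>0$ there is a generic $\epsilon$-grid containing $x$. With $I_i(x)=\{y\in X: y\sim_i x\}$, $\mathcal C$ satisfies Thin Individual Indifference if $I_i(x)\setminus\{x\}$ has empty interior for every player $i$ and every $x\in X$. *)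

theory Defs
  imports "HOL-Analysis.Analysis"
begin

text \<open>Players: voters N (finite) plus agenda setter A; the player set is insert A N.
  Preference of player i: R i x y means x \<succeq>_i y.\<close>

definition complete_pref :: "'a set \<Rightarrow> ('a \<Rightarrow> 'a \<Rightarrow> bool) \<Rightarrow> bool" where
  "complete_pref X r \<longleftrightarrow> (\<forall>x\<in>X. \<forall>y\<in>X. r x y \<or> r y x)"

definition transitive_pref :: "'a set \<Rightarrow> ('a \<Rightarrow> 'a \<Rightarrow> bool) \<Rightarrow> bool" where
  "transitive_pref X r \<longleftrightarrow> (\<forall>x\<in>X. \<forall>y\<in>X. \<forall>z\<in>X. r x y \<and> r y z \<longrightarrow> r x z)"

definition continuous_pref :: "'a::topological_space set \<Rightarrow> ('a \<Rightarrow> 'a \<Rightarrow> bool) \<Rightarrow> bool" where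
  "continuous_pref X r \<longleftrightarrow>
     (\<forall>x\<in>X. closedin (top_of_set X) {y\<in>X. r y x} \<and> closedin (top_of_set X) {y\<in>X. r x y})"

definition collective_choice_problem ::
  "'a::metric_space set \<Rightarrow> 'p set \<Rightarrow> 'p \<Rightarrow> ('p \<Rightarrow> 'a \<Rightarrow> 'a \<Rightarrow> bool) \<Rightarrow> bool" where
  "collective_choice_problem X N A R \<longleftrightarrow>
     compact X \<and> finite N \<and>
     (\<forall>i\<in>insert A N. complete_pref X (R i) \<and> transitive_pref X (R i) \<and> continuous_pref X (R i))"

definition generic_grid ::
  "'a::metric_space set \<Rightarrow> 'p set \<Rightarrow> 'p \<Rightarrow> ('p \<Rightarrow> 'a \<Rightarrow> 'a \<Rightarrow> bool) \<Rightarrow> real \<Rightarrow> 'a set \<Rightarrow> bool" where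
  "generic_grid X N A R \<epsilon> G \<longleftrightarrow>
     finite G \<and> G \<subseteq> X \<and> (\<forall>x\<in>X. infdist x G < \<epsilon>) \<and>
     (\<forall>i\<in>insert A N. \<forall>x\<in>G. \<forall>y\<in>G. R i x y \<and> R i y x \<longrightarrow> x = y)"

definition finitely_approximable ::
  "'a::metric_space set \<Rightarrow> 'p set \<Rightarrow> 'p \<Rightarrow> ('p \<Rightarrow> 'a \<Rightarrow> 'a \<Rightarrow> bool) \<Rightarrow> bool" where
  "finitely_approximable X N A R \<longleftrightarrow>
     (\<forall>x\<in>X. \<forall>\<epsilon>>0. \<exists>G. generic_grid X N A R \<epsilon> G \<and> x \<in> G)"

definition indiff_set :: "'a set \<Rightarrow> ('a \<Rightarrow> 'a \<Rightarrow> bool) \<Rightarrow> 'a \<Rightarrow> 'a set" where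
  "indiff_set X r x = {y\<in>X. r y x \<and> r x y}"

definition thin_individual_indifference ::
  "'a::metric_space set \<Rightarrow> 'p set \<Rightarrow> 'p \<Rightarrow> ('p \<Rightarrow> 'a \<Rightarrow> 'a \<Rightarrow> bool) \<Rightarrow> bool" where
  "thin_individual_indifference X N A R \<longleftrightarrow>
     (\<forall>i\<in>insert A N. \<forall>x\<in>X. (top_of_set X) interior_of (indiff_set X (R i) x - {x}) = {})"

end

theory Submission
  imports Defs
begin

lemma closedin_indiff:
  assumes "continuous_pref X r" "p \<in> X"
  shows "closedin (top_of_set X) (indiff_set X r p)"
proof -
  have "indiff_set X r p = {y\<in>X. r y p} \<inter> {y\<in>X. r p y}"
    unfolding indiff_set_def by auto
  then show ?thesis using assms unfolding continuous_pref_def by (simp add: closedin_Int)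
qed

lemma avoid:
  fixes X :: "'a::metric_space set"
  assumes "finite S"
    and H: "\<forall>(i,p)\<in>S. p \<in> X \<and> closedin (top_of_set X) (indiff_set X (R i) p)
              \<and> (top_of_set X) interior_of (indiff_set X (R i) p - {p}) = {}"
    and V: "openin (top_of_set X) V" "V \<noteq> {}"
  shows "\<exists>W. openin (top_of_set X) W \<and> W \<noteq> {} \<and> W \<subseteq> V \<and>
            (\<forall>(i,p)\<in>S. W \<inter> (indiff_set X (R i) p - {p}) = {})"
  using assms(1,2)
proof (induction S rule: finite_induct)
  case empty
  then show ?case using V by blast
next
  case (insert ip S)
  obtain i p where ip: "ip = (i,p)" by fastforce
  from insert obtain W where W: "openin (top_of_set X) W" "W \<noteq> {}" "W \<subseteq> V"
    "\<forall>(i,p)\<in>S. W \<inter> (indiff_set X (R i) p - {p}) = {}" by auto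
  define I where "I = indiff_set X (R i) p"
  have pX: "p \<in> X" and cI: "closedin (top_of_set X) I"
    and tI: "(top_of_set X) interior_of (I - {p}) = {}"
    using insert.prems ip I_def by auto
  show ?case
  proof (cases "W - I = {}")
    case False
    have "openin (top_of_set X) (W - I)" using W(1) cI by (simp add: openin_diff)
    moreover have "\<forall>(i,p)\<in>insert ip S. (W - I) \<inter> (indiff_set X (R i) p - {p}) = {}"
      using W(4) I_def ip by auto
    ultimately show ?thesis using False W
      by (intro exI[of _ "W - I"]) auto
  next
    case True
    have "closedin (top_of_set X) {p}"
      using closedin_closed[of X "{p}"] pX by (metis closed_singleton inf.absorb_iff2 insert_subset  inf_bot_right insert_inter_insert empty_subsetI inf_commute)
    then have "openin (top_of_set X) (W - {p})" using W(1) by (simp add: openin_diff)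
    moreover have "W - {p} \<subseteq> I - {p}" using True by auto
    ultimately have "W - {p} \<subseteq> (top_of_set X) interior_of (I - {p})"
      by (simp add: interior_of_maximal)
    then have "W - {p} = {}" using tI by auto
    then have "W \<inter> (I - {p}) = {}" by auto
    then show ?thesis using W I_def ip by auto
  qed
qed

theorem lemma3:
  fixes X :: "'a::metric_space set" and N :: "'p set" and A :: 'p
    and R :: "'p \<Rightarrow> 'a \<Rightarrow> 'a \<Rightarrow> bool"
  assumes "collective_choice_problem X N A R"
  shows "finitely_approximable X N A R \<longleftrightarrow> thin_individual_indifference X N A R"
proof
  assume FA: "finitely_approximable X N A R"
  show "thin_individual_indifference X N A R"
    unfolding thin_individual_indifference_def
  proof (intro ballI, rule ccontr)
    fix i x assume i: "i \<in> insert A N" and x: "x \<in> X"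
      and ne: "(top_of_set X) interior_of (indiff_set X (R i) x - {x}) \<noteq> {}"
    define T where "T = (top_of_set X) interior_of (indiff_set X (R i) x - {x})"
    obtain y where y: "y \<in> T" using ne T_def by auto
    have oT: "openin (top_of_set X) T" unfolding T_def by simp
    have TX: "T \<subseteq> indiff_set X (R i) x - {x}" unfolding T_def by (rule interior_of_subset)
    from oT y obtain e where e: "e > 0" "\<forall>x'\<in>X. dist x' y < e \<longrightarrow> x' \<in> T"
      unfolding openin_euclidean_subtopology_iff by blast
    have yX: "y \<in> X" using oT y unfolding openin_euclidean_subtopology_iff by auto
    from FA x e(1) obtain G where G: "generic_grid X N A R e G" "x \<in> G"
      unfolding finitely_approximable_def by blast
    have fG: "finite G" "G \<subseteq> X" "infdist y G < e" using G yX unfolding generic_grid_def by auto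
    have "G \<noteq> {}" using G by auto
    then have "(INF g\<in>G. dist y g) < e" using fG infdist_notempty by metis
    then obtain g where g: "g \<in> G" "dist y g < e"
      using cINF_less_iff[of G "(\<lambda>g. dist y g)" e] \<open>G \<noteq> {}\<close> fG(1) by (auto simp: bdd_below_finite)
    have "g \<in> T" using e(2) g fG(2) by (auto simp: dist_commute)
    then have "g \<in> indiff_set X (R i) x" "g \<noteq> x" using TX by auto
    then have "R i g x" "R i x g" unfolding indiff_set_def by auto
    then have "g = x" using G g i unfolding generic_grid_def by blast
    then show False using \<open>g \<noteq> x\<close> by simp
  qed
next
  assume TII: "thin_individual_indifference X N A R"
  have cX: "compact X" and fN: "finite N"
    and prefs: "\<forall>i\<in>insert A N. continuous_pref X (R i)"
    using assms unfolding collective_choice_problem_def by auto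
  show "finitely_approximable X N A R"
    unfolding finitely_approximable_def
  proof (intro ballI allI impI)
    fix x \<epsilon> assume x: "x \<in> X" and eps: "(\<epsilon>::real) > 0"
    let ?e = "\<epsilon>/2"
    have e2: "?e > 0" using eps by simp
    have cov: "X \<subseteq> (\<Union>c\<in>X. ball c ?e)" using e2 by auto
    obtain C where C: "C \<subseteq> X" "finite C" "X \<subseteq> (\<Union>c\<in>C. ball c ?e)"
      using compactE_image[OF cX _ cov] by blast
    have main: "\<exists>G. finite G \<and> G \<subseteq> X \<and> x \<in> G \<and>
        (\<forall>i\<in>insert A N. \<forall>a\<in>G. \<forall>b\<in>G. R i a b \<and> R i b a \<longrightarrow> a = b) \<and>
        (\<forall>c\<in>C. \<exists>g\<in>G. dist c g < ?e)"
      using C(2,1)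
    proof (induction C rule: finite_induct)
      case empty
      show ?case by (rule exI[of _ "{x}"]) (use x in auto)
    next
      case (insert c C)
      then obtain G where G: "finite G" "G \<subseteq> X" "x \<in> G"
        "\<forall>i\<in>insert A N. \<forall>a\<in>G. \<forall>b\<in>G. R i a b \<and> R i b a \<longrightarrow> a = b"
        "\<forall>c\<in>C. \<exists>g\<in>G. dist c g < ?e" by auto
      have cX': "c \<in> X" using insert by auto
      define V where "V = ball c ?e \<inter> X"
      have oV: "openin (top_of_set X) V" unfolding V_def
        using openin_open_Int[of "ball c ?e" X] by (simp add: Int_commute)
      have neV: "V \<noteq> {}" 
      proof -
        have "c \<in> ball c ?e" using e2 by (rule centre_in_ball[THEN iffD2])
        then have "c \<in> V" unfolding V_def using cX' by (rule IntI)
        then show ?thesis by auto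
      qed
      define S where "S = (insert A N) \<times> G"
      have fS: "finite S" using fN G(1) S_def by simp
      have HS: "\<forall>(i,p)\<in>S. p \<in> X \<and> closedin (top_of_set X) (indiff_set X (R i) p)
              \<and> (top_of_set X) interior_of (indiff_set X (R i) p - {p}) = {}"
      proof (intro ballI, clarify)
        fix i p assume "(i,p) \<in> S"
        then have ip: "i \<in> insert A N" "p \<in> G" unfolding S_def by auto
        then have pX: "p \<in> X" using G(2) by auto
        show "p \<in> X \<and> closedin (top_of_set X) (indiff_set X (R i) p)
              \<and> (top_of_set X) interior_of (indiff_set X (R i) p - {p}) = {}"
        proof (intro conjI)
          show "p \<in> X" by (rule pX)
          have "continuous_pref X (R i)" using prefs ip(1) by blast
          then show "closedin (top_of_set X) (indiff_set X (R i) p)"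
            using closedin_indiff pX by blast
          show "(top_of_set X) interior_of (indiff_set X (R i) p - {p}) = {}"
            using TII ip(1) pX unfolding thin_individual_indifference_def by blast
        qed
      qed
      obtain W where W: "openin (top_of_set X) W" "W \<noteq> {}" "W \<subseteq> V"
        "\<forall>(i,p)\<in>S. W \<inter> (indiff_set X (R i) p - {p}) = {}"
        using avoid[OF fS HS oV neV] by blast
      obtain g where g: "g \<in> W" using W(2) by auto
      have gX: "g \<in> X" and gc: "dist c g < ?e" using g W(3) V_def by auto
      have bad: "R i g p \<and> R i p g \<longrightarrow> g = p" if "i \<in> insert A N" "p \<in> G" for i p
      proof
        assume r: "R i g p \<and> R i p g"
        have "(i,p) \<in> S" using that S_def by auto
        then have "W \<inter> (indiff_set X (R i) p - {p}) = {}" using W(4) by auto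
        moreover have "g \<in> indiff_set X (R i) p" using r gX unfolding indiff_set_def by auto
        ultimately show "g = p" using g by auto
      qed
      show ?case
      proof (rule exI[of _ "insert g G"], intro conjI)
        show "\<forall>i\<in>insert A N. \<forall>a\<in>insert g G. \<forall>b\<in>insert g G. R i a b \<and> R i b a \<longrightarrow> a = b"
        proof (intro ballI impI)
          fix i a b assume i: "i \<in> insert A N" and a: "a \<in> insert g G" and b: "b \<in> insert g G"
            and r: "R i a b \<and> R i b a"
          show "a = b"
          proof (cases "a = g")
            case True
            then show ?thesis using b r bad[OF i] by auto
          next
            case False
            then have aG: "a \<in> G" using a by auto
            show ?thesis
            proof (cases "b = g")
              case True
              then show ?thesis using aG r bad[OF i aG] by auto
            next
              case False
              then show ?thesis using aG b r G(4) i by auto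
            qed
          qed
        qed
        show "\<forall>c'\<in>insert c C. \<exists>g'\<in>insert g G. dist c' g' < ?e"
          using G(5) gc by blast
      qed (use G gX in auto)
    qed
    then obtain G where G: "finite G" "G \<subseteq> X" "x \<in> G"
        "\<forall>i\<in>insert A N. \<forall>a\<in>G. \<forall>b\<in>G. R i a b \<and> R i b a \<longrightarrow> a = b"
        "\<forall>c\<in>C. \<exists>g\<in>G. dist c g < ?e" by (elim exE conjE) (rule that, assumption+)
    have "infdist y G < \<epsilon>" if y: "y \<in> X" for y
    proof -
      obtain c where c: "c \<in> C" "y \<in> ball c ?e" using C(3) y by blast
      have cy: "dist c y < ?e" using c(2) by simp
      obtain g where g: "g \<in> G" "dist c g < ?e" using G(5) c by blast
      have "infdist y G \<le> dist y g" using g(1) by (rule infdist_le)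
      also have "\<dots> \<le> dist y c + dist c g" by (rule dist_triangle)
      also have "\<dots> < \<epsilon>" using cy g by (simp add: dist_commute)
      finally show ?thesis .
    qed
    then have "generic_grid X N A R \<epsilon> G"
      using G(1,2,4) unfolding generic_grid_def by simp
    then show "\<exists>G. generic_grid X N A R \<epsilon> G \<and> x \<in> G"
      using G(3) by blast
  qed
qed

end
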